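(* Let $\mathcal{X}\subseteq\mathbb{R}^{d_X}$, $\mathcal{Z}\subseteq\mathbb{R}^{d_Z}$, and let $\Theta=\Gamma\times\Delta\subseteq\mathbb{R}^{d_\gamma+d_\delta}$ be compact and non-empty. Let $X_1,\ldots,X_n$ and $Z_1,\ldots,Z_n$ be independent and identically distributed random vectors with the same distributions as random vectors $X$ (values in $\mathcal{X}$) and $Z$ (values in $\mathcal{Z}$), respectively. Let $G:\mathcal{Z}\times\Gamma\to\mathcal{X}$ and $D:\mathcal{X}\times\Delta\to(0,1)$ be functions, and define $F(x,z,\gamma,\delta)=\ln(D(x,\delta))+\ln(1-D(G(z,\gamma),\delta))$; assume $F(X,Z,\gamma,\delta)$ is measurable for every $(\gamma,\delta)\in\Theta$ and, with probability one, continuous in $(\gamma,\delta)$ on $\Theta$. Define $f(\gamma,\delta)=\mathbb{E}[F(X,Z,\gamma,\delta)]$, $\varphi(\gamma)=\sup_{\delta\in\Delta}f(\gamma,\delta)$, $V_0=\inf_{\gamma\in\Gamma}\varphi(\gamma)$, and $\Theta_0=\{(\gamma_0,\delta_0)\in\Theta: f(\gamma_0,\delta_0)=\varphi(\gamma_0)\text{ and }\varphi(\gamma_0)=V_0\}$. Define the sample quantities $\hat f_n(\gamma,\delta)=\frac1n\sum_{i=1}^nF(X_i,Z_i,\gamma,\delta)$, $\hat\varphi_n(\gamma)=\sup_{\delta\in\Delta}\hat f_n(\gamma,\delta)$, $\hat V_n=\inf_{\gamma\in\Gamma}\hat\varphi_n(\gamma)$, $\hat Q_n(\gamma,\delta)=\max\{\hat\varphi_n(\gamma)-\hat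 f_n(\gamma,\delta),\ \hat\varphi_n(\gamma)-\hat V_n\}$, and for a sequence of random variables $\tau_n$, $\hat\Theta_n(\tau_n)=\{\theta\in\Theta:\hat Q_n(\theta)\le\tau_n\}$. (a) Suppose $\sup_{\theta\in\Theta}|\hat f_n(\theta)-f(\theta)|\to 0$ in probability with $f$ continuous on $\Theta$, and suppose $\tau_n$ is a sequence of non-negative random variables with $\tau_n\to0$ in probability. Then $\sup_{\theta\in\hat\Theta_n(\tau_n)}d(\theta,\Theta_0)\to0$ in probability, and $\hat V_n\to V_0$ in probability. (b) Suppose $\sup_{\theta\in\Theta}|\hat f_n(\theta)-f(\theta)|\to 0$ in probability with $f$ continuous on $\Theta$ and moreover $\sup_{\theta\in\Theta}n^{1/2}|\hat f_n(\theta)-f(\theta)|=O_p(1)$, and suppose $\tau_n$ is a sequence of positive random variables with $\tau_n\to0$ in probability and $n^{-1/2}/\tau_n\to0$ in probability. Then $\sup_{\theta\in\Theta_0}d(\theta,\hat\Theta_n(\tau_n))\to0$ in probability, so that $d_H(\hat\Theta_n(\tau_n),\Theta_0)\to0$ in probability.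
   Context: $|\cdot|$ is the Euclidean norm; for a point $a$ and a set $B$, $d(a,B)=\inf_{b\in B}|a-b|$. For non-empty bounded sets $A,B$ the Hausdorff distance is $d_H(A,B)=\max\{\sup_{a\in A}d(a,B),\sup_{b\in B}d(b,A)\}$. $O_p(1)$ denotes a sequence of random variables bounded in probability. $\Theta_0$ is the set of solutions of the population minimax problem $\inf_{\gamma}\sup_{\delta}f(\gamma,\delta)$ and $\hat\Theta_n(\tau_n)$ the set of $\tau_n$-approximate solutions of the sample problem $\inf_\gamma\sup_\delta\hat f_n(\gamma,\delta)$. *)

theory Defs
  imports "HOL-Probability.Probability"
begin

definition ganF :: "('x \<Rightarrow> 'd \<Rightarrow> real) \<Rightarrow> ('z \<Rightarrow> 'g \<Rightarrow> 'x) \<Rightarrow> 'x \<Rightarrow> 'z \<Rightarrow> 'g \<Rightarrow> 'd \<Rightarrow> real"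
  where "ganF D G x z \<gamma> \<delta> = ln (D x \<delta>) + ln (1 - D (G z \<gamma>) \<delta>)"

definition phi_of :: "'d set \<Rightarrow> ('g \<times> 'd \<Rightarrow> real) \<Rightarrow> 'g \<Rightarrow> real"
  where "phi_of \<Delta> g \<gamma> = (SUP \<delta>\<in>\<Delta>. g (\<gamma>, \<delta>))"

definition V_of :: "'g set \<Rightarrow> 'd set \<Rightarrow> ('g \<times> 'd \<Rightarrow> real) \<Rightarrow> real"
  where "V_of \<Gamma> \<Delta> g = (INF \<gamma>\<in>\<Gamma>. phi_of \<Delta> g \<gamma>)"

text \<open>Set of solutions of the minimax problem (Theta_0 when g = f).\<close>
definition minimax_sols :: "'g set \<Rightarrow> 'd set \<Rightarrow> ('g \<times> 'd \<Rightarrow> real) \<Rightarrow> ('g \<times> 'd) set"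
  where "minimax_sols \<Gamma> \<Delta> g =
    {\<theta> \<in> \<Gamma> \<times> \<Delta>. g \<theta> = phi_of \<Delta> g (fst \<theta>) \<and> phi_of \<Delta> g (fst \<theta>) = V_of \<Gamma> \<Delta> g}"

definition Q_of :: "'g set \<Rightarrow> 'd set \<Rightarrow> ('g \<times> 'd \<Rightarrow> real) \<Rightarrow> 'g \<times> 'd \<Rightarrow> real"
  where "Q_of \<Gamma> \<Delta> g \<theta> =
    max (phi_of \<Delta> g (fst \<theta>) - g \<theta>) (phi_of \<Delta> g (fst \<theta>) - V_of \<Gamma> \<Delta> g)"

definition approx_sols :: "'g set \<Rightarrow> 'd set \<Rightarrow> ('g \<times> 'd \<Rightarrow> real) \<Rightarrow> real \<Rightarrow> ('g \<times> 'd) set"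
  where "approx_sols \<Gamma> \<Delta> g t = {\<theta> \<in> \<Gamma> \<times> \<Delta>. Q_of \<Gamma> \<Delta> g \<theta> \<le> t}"

definition fhat :: "('x \<Rightarrow> 'd \<Rightarrow> real) \<Rightarrow> ('z \<Rightarrow> 'g \<Rightarrow> 'x) \<Rightarrow> (nat \<Rightarrow> 'a \<Rightarrow> 'x) \<Rightarrow> (nat \<Rightarrow> 'a \<Rightarrow> 'z)
    \<Rightarrow> nat \<Rightarrow> 'a \<Rightarrow> 'g \<times> 'd \<Rightarrow> real"
  where "fhat D G Xs Zs n \<omega> \<theta> =
    (\<Sum>i = 1..n. ganF D G (Xs i \<omega>) (Zs i \<omega>) (fst \<theta>) (snd \<theta>)) / real n"

text \<open>Hausdorff distance (used only for non-empty bounded sets, as in the paper).\<close>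
definition hausdorff_dist :: "'b::metric_space set \<Rightarrow> 'b set \<Rightarrow> real"
  where "hausdorff_dist A B = max (SUP a\<in>A. infdist a B) (SUP b\<in>B. infdist b A)"

text \<open>Outer probability of S is less than e (S need not be measurable).\<close>
definition outer_prob_less :: "'a measure \<Rightarrow> 'a set \<Rightarrow> real \<Rightarrow> bool"
  where "outer_prob_less M S e \<longleftrightarrow> (\<exists>A\<in>sets M. S \<inter> space M \<subseteq> A \<and> measure M A < e)"

definition vanishing_events :: "'a measure \<Rightarrow> (nat \<Rightarrow> 'a set) \<Rightarrow> bool"
  where "vanishing_events M E \<longleftrightarrow> (\<forall>e>0. eventually (\<lambda>n. outer_prob_less M (E n) e) sequentially)"

definition tendsto_in_prob :: "'a measure \<Rightarrow> (nat \<Rightarrow> 'a \<Rightarrow> real) \<Rightarrow> real \<Rightarrow> bool"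
  where "tendsto_in_prob M Y c \<longleftrightarrow>
    (\<forall>\<epsilon>>0. vanishing_events M (\<lambda>n. {\<omega> \<in> space M. \<bar>Y n \<omega> - c\<bar> > \<epsilon>}))"

end

theory Submission
  imports Defs
begin


lemma sup_close:
  fixes g h :: "'b \<Rightarrow> real"
  assumes ne: "A \<noteq> {}" and bh: "bdd_above (h ` A)" and c: "\<forall>x\<in>A. \<bar>g x - h x\<bar> \<le> \<eta>"
  shows "\<bar>(SUP x\<in>A. g x) - (SUP x\<in>A. h x)\<bar> \<le> \<eta>"
proof -
  obtain b where b: "\<forall>x\<in>A. h x \<le> b" using bh by (auto simp: bdd_above_def)
  have bg: "bdd_above (g ` A)"
    by (rule bdd_aboveI2[where M="b+\<eta>"]) (use b c in \<open>force simp: abs_le_iff\<close>)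
  have 1: "(SUP x\<in>A. g x) \<le> (SUP x\<in>A. h x) + \<eta>"
  proof (rule cSUP_least[OF ne])
    fix x assume x: "x \<in> A"
    have "h x \<le> (SUP x\<in>A. h x)" by (rule cSUP_upper[OF x bh])
    then show "g x \<le> (SUP x\<in>A. h x) + \<eta>" using c x by (force simp: abs_le_iff)
  qed
  have 2: "(SUP x\<in>A. h x) \<le> (SUP x\<in>A. g x) + \<eta>"
  proof (rule cSUP_least[OF ne])
    fix x assume x: "x \<in> A"
    have "g x \<le> (SUP x\<in>A. g x)" by (rule cSUP_upper[OF x bg])
    then show "h x \<le> (SUP x\<in>A. g x) + \<eta>" using c x by (force simp: abs_le_iff)
  qed
  show ?thesis using 1 2 by (simp add: abs_le_iff)
qed

lemma inf_close:
  fixes g h :: "'b \<Rightarrow> real"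
  assumes ne: "A \<noteq> {}" and bh: "bdd_below (h ` A)" and c: "\<forall>x\<in>A. \<bar>g x - h x\<bar> \<le> \<eta>"
  shows "\<bar>(INF x\<in>A. g x) - (INF x\<in>A. h x)\<bar> \<le> \<eta>"
proof -
  obtain b where b: "\<forall>x\<in>A. b \<le> h x" using bh by (auto simp: bdd_below_def)
  have bg: "bdd_below (g ` A)"
    by (rule bdd_belowI2[where m="b-\<eta>"]) (use b c in \<open>force simp: abs_le_iff\<close>)
  have 1: "(INF x\<in>A. g x) - \<eta> \<le> (INF x\<in>A. h x)"
  proof -
    have "(INF x\<in>A. g x) - \<eta> \<le> (INF x\<in>A. h x)"
    proof (rule cINF_greatest[OF ne])
      fix x assume x: "x \<in> A"
      have "(INF x\<in>A. g x) \<le> g x" by (rule cINF_lower[OF bg x])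
      then show "(INF x\<in>A. g x) - \<eta> \<le> h x" using c x by (force simp: abs_le_iff)
    qed
    then show ?thesis .
  qed
  have 2: "(INF x\<in>A. h x) - \<eta> \<le> (INF x\<in>A. g x)"
  proof (rule cINF_greatest[OF ne])
    fix x assume x: "x \<in> A"
    have "(INF x\<in>A. h x) \<le> h x" by (rule cINF_lower[OF bh x])
    then show "(INF x\<in>A. h x) - \<eta> \<le> g x" using c x by (force simp: abs_le_iff)
  qed
  show ?thesis using 1 2 by (simp add: abs_le_iff)
qed

context
  fixes \<Gamma> :: "'g::metric_space set" and \<Delta> :: "'d::metric_space set"
    and f :: "'g \<times> 'd \<Rightarrow> real" and \<Theta> :: "('g \<times> 'd) set"
  assumes \<Theta>_eq: "\<Theta> = \<Gamma> \<times> \<Delta>" and cpt: "compact \<Theta>" and ne: "\<Theta> \<noteq> {}"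
    and fc: "continuous_on \<Theta> f"
begin

lemma Gne: "\<Gamma> \<noteq> {}" and Dne: "\<Delta> \<noteq> {}" using ne \<Theta>_eq by auto

lemma cptG: "compact \<Gamma>"
proof -
  have "\<Gamma> = fst ` \<Theta>" using \<Theta>_eq Dne by force
  then show ?thesis using compact_continuous_image[OF continuous_on_fst[OF continuous_on_id] cpt] by simp
qed

lemma cptD: "compact \<Delta>"
proof -
  have "\<Delta> = snd ` \<Theta>" using \<Theta>_eq Gne by force
  then show ?thesis using compact_continuous_image[OF continuous_on_snd[OF continuous_on_id] cpt] by simp
qed

lemma bnd: obtains B where "\<forall>\<theta>\<in>\<Theta>. \<bar>f \<theta>\<bar> \<le> B"
  using compact_imp_bounded[OF compact_continuous_image[OF fc cpt]] by (auto simp: bounded_real)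

lemma bddf: "\<gamma> \<in> \<Gamma> \<Longrightarrow> bdd_above ((\<lambda>\<delta>. f (\<gamma>, \<delta>)) ` \<Delta>)"
proof -
  assume g: "\<gamma> \<in> \<Gamma>"
  obtain B where B: "\<forall>\<theta>\<in>\<Theta>. \<bar>f \<theta>\<bar> \<le> B" using bnd by blast
  show ?thesis by (rule bdd_aboveI2[where M=B]) (use B g \<Theta>_eq in \<open>force simp: abs_le_iff\<close>)
qed

lemma phi_upper: "\<gamma> \<in> \<Gamma> \<Longrightarrow> \<delta> \<in> \<Delta> \<Longrightarrow> f (\<gamma>, \<delta>) \<le> phi_of \<Delta> f \<gamma>"
  unfolding phi_of_def by (rule cSUP_upper) (auto intro: bddf)

lemma phi_bdd_below: "bdd_below (phi_of \<Delta> f ` \<Gamma>)"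
proof -
  obtain B where B: "\<forall>\<theta>\<in>\<Theta>. \<bar>f \<theta>\<bar> \<le> B" using bnd by blast
  obtain \<delta>0 where d0: "\<delta>0 \<in> \<Delta>" using Dne by blast
  show ?thesis
  proof (rule bdd_belowI2[where m="-B"])
    fix \<gamma> assume g: "\<gamma> \<in> \<Gamma>"
    have "-B \<le> f (\<gamma>, \<delta>0)" using B g d0 \<Theta>_eq by (force simp: abs_le_iff)
    also have "\<dots> \<le> phi_of \<Delta> f \<gamma>" by (rule phi_upper[OF g d0])
    finally show "-B \<le> phi_of \<Delta> f \<gamma>" .
  qed
qed

lemma V_le: "\<gamma> \<in> \<Gamma> \<Longrightarrow> V_of \<Gamma> \<Delta> f \<le> phi_of \<Delta> f \<gamma>"
  unfolding V_of_def by (rule cINF_lower[OF phi_bdd_below])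

lemma phi_close:
  assumes "\<forall>\<theta>\<in>\<Theta>. \<bar>g \<theta> - f \<theta>\<bar> \<le> \<eta>" "\<gamma> \<in> \<Gamma>"
  shows "\<bar>phi_of \<Delta> g \<gamma> - phi_of \<Delta> f \<gamma>\<bar> \<le> \<eta>"
  unfolding phi_of_def
  by (rule sup_close[OF Dne bddf[OF assms(2)]]) (use assms \<Theta>_eq in auto)

lemma V_close:
  assumes "\<forall>\<theta>\<in>\<Theta>. \<bar>g \<theta> - f \<theta>\<bar> \<le> \<eta>"
  shows "\<bar>V_of \<Gamma> \<Delta> g - V_of \<Gamma> \<Delta> f\<bar> \<le> \<eta>"
  unfolding V_of_def
  by (rule inf_close[OF Gne phi_bdd_below]) (use phi_close[OF assms] in auto)

lemma Q_close:
  assumes a: "\<forall>\<theta>\<in>\<Theta>. \<bar>g \<theta> - f \<theta>\<bar> \<le> \<eta>" and t: "\<theta> \<in> \<Theta>"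
  shows "\<bar>Q_of \<Gamma> \<Delta> g \<theta> - Q_of \<Gamma> \<Delta> f \<theta>\<bar> \<le> 2 * \<eta>"
proof -
  have h1: "\<bar>phi_of \<Delta> g (fst \<theta>) - phi_of \<Delta> f (fst \<theta>)\<bar> \<le> \<eta>"
    using phi_close[OF a] t \<Theta>_eq by auto
  have h2: "\<bar>g \<theta> - f \<theta>\<bar> \<le> \<eta>" using a t by auto
  have h3: "\<bar>V_of \<Gamma> \<Delta> g - V_of \<Gamma> \<Delta> f\<bar> \<le> \<eta>" by (rule V_close[OF a])
  show ?thesis unfolding Q_of_def max_def using h1 h2 h3 by (auto simp: abs_le_iff)
qed

lemma Q_nonneg: "\<theta> \<in> \<Theta> \<Longrightarrow> 0 \<le> Q_of \<Gamma> \<Delta> f \<theta>"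
  using phi_upper[of "fst \<theta>" "snd \<theta>"] \<Theta>_eq unfolding Q_of_def by (auto simp: mem_Times_iff)

lemma Q_zero: "\<theta> \<in> \<Theta> \<Longrightarrow> Q_of \<Gamma> \<Delta> f \<theta> \<le> 0 \<Longrightarrow> \<theta> \<in> minimax_sols \<Gamma> \<Delta> f"
  using phi_upper[of "fst \<theta>" "snd \<theta>"] V_le[of "fst \<theta>"] \<Theta>_eq
  unfolding Q_of_def minimax_sols_def by (auto simp: mem_Times_iff)

lemma Q_sol: "\<theta> \<in> minimax_sols \<Gamma> \<Delta> f \<Longrightarrow> Q_of \<Gamma> \<Delta> f \<theta> = 0 \<and> \<theta> \<in> \<Theta>"
  unfolding Q_of_def minimax_sols_def using \<Theta>_eq by auto

lemma phi_cont: "continuous_on \<Gamma> (phi_of \<Delta> f)"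
proof -
  have uc: "uniformly_continuous_on \<Theta> f" by (rule compact_uniformly_continuous[OF fc cpt])
  show ?thesis unfolding continuous_on_iff
  proof (intro ballI allI impI)
    fix x e assume x: "x \<in> \<Gamma>" and e: "(0::real) < e"
    obtain d where d: "d > 0" and hd: "\<forall>u\<in>\<Theta>. \<forall>u'\<in>\<Theta>. dist u' u < d \<longrightarrow> dist (f u') (f u) < e/2"
      using uc e unfolding uniformly_continuous_on_def by (meson half_gt_zero)
    show "\<exists>d>0. \<forall>x'\<in>\<Gamma>. dist x' x < d \<longrightarrow> dist (phi_of \<Delta> f x') (phi_of \<Delta> f x) < e"
    proof (intro exI[of _ d] conjI ballI impI d)
      fix x' assume x': "x' \<in> \<Gamma>" and dx: "dist x' x < d"
      have "\<forall>\<delta>\<in>\<Delta>. \<bar>f (x', \<delta>) - f (x, \<delta>)\<bar> \<le> e/2"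
      proof
        fix \<delta> assume "\<delta> \<in> \<Delta>"
        then have "dist (f (x', \<delta>)) (f (x, \<delta>)) < e/2"
          using hd x x' dx \<Theta>_eq by (auto simp: dist_Pair_Pair)
        then show "\<bar>f (x', \<delta>) - f (x, \<delta>)\<bar> \<le> e/2" by (simp add: dist_real_def)
      qed
      then have "\<bar>phi_of \<Delta> f x' - phi_of \<Delta> f x\<bar> \<le> e/2"
        unfolding phi_of_def by (intro sup_close[OF Dne bddf[OF x]])
      then show "dist (phi_of \<Delta> f x') (phi_of \<Delta> f x) < e" using e by (simp add: dist_real_def)
    qed
  qed
qed

lemma Q_cont: "continuous_on \<Theta> (Q_of \<Gamma> \<Delta> f)"
proof -
  have pc: "continuous_on \<Theta> (\<lambda>\<theta>. phi_of \<Delta> f (fst \<theta>))"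
    by (rule continuous_on_compose2[OF phi_cont continuous_on_fst[OF continuous_on_id]])
       (use \<Theta>_eq in auto)
  show ?thesis unfolding Q_of_def
    by (intro continuous_on_max continuous_on_diff pc fc continuous_on_const)
qed

lemma sols_ne: "minimax_sols \<Gamma> \<Delta> f \<noteq> {}"
proof -
  obtain \<gamma>0 where g0: "\<gamma>0 \<in> \<Gamma>" and m: "\<forall>\<gamma>\<in>\<Gamma>. phi_of \<Delta> f \<gamma>0 \<le> phi_of \<Delta> f \<gamma>"
    using continuous_attains_inf[OF cptG Gne phi_cont] by blast
  have fc2: "continuous_on \<Delta> (\<lambda>\<delta>. f (\<gamma>0, \<delta>))"
    by (rule continuous_on_compose2[OF fc]) (auto intro!: continuous_intros simp: \<Theta>_eq g0)
  obtain \<delta>0 where d0: "\<delta>0 \<in> \<Delta>" and md: "\<forall>\<delta>\<in>\<Delta>. f (\<gamma>0, \<delta>) \<le> f (\<gamma>0, \<delta>0)"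
    using continuous_attains_sup[OF cptD Dne fc2] by blast
  have e1: "phi_of \<Delta> f \<gamma>0 = f (\<gamma>0, \<delta>0)"
    using phi_upper[OF g0 d0] cSUP_least[OF Dne, of "\<lambda>\<delta>. f (\<gamma>0, \<delta>)" "f (\<gamma>0, \<delta>0)"] md
    unfolding phi_of_def by force
  have e2: "phi_of \<Delta> f \<gamma>0 = V_of \<Gamma> \<Delta> f"
    using V_le[OF g0] cINF_greatest[OF Gne, of "phi_of \<Delta> f \<gamma>0" "phi_of \<Delta> f"] m
    unfolding V_of_def by force
  have "(\<gamma>0, \<delta>0) \<in> minimax_sols \<Gamma> \<Delta> f"
    unfolding minimax_sols_def using e1 e2 g0 d0 by auto
  then show ?thesis by blast
qed

lemma D1:
  assumes e: "\<epsilon> > 0"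
  shows "\<exists>\<eta>>0. \<forall>g t \<theta>. (\<forall>\<theta>\<in>\<Theta>. \<bar>g \<theta> - f \<theta>\<bar> \<le> \<eta>) \<longrightarrow> t \<le> \<eta> \<longrightarrow>
            \<theta> \<in> approx_sols \<Gamma> \<Delta> g t \<longrightarrow> infdist \<theta> (minimax_sols \<Gamma> \<Delta> f) < \<epsilon>"
proof -
  define K where "K = \<Theta> \<inter> {\<theta>. \<epsilon> \<le> infdist \<theta> (minimax_sols \<Gamma> \<Delta> f)}"
  have as: "approx_sols \<Gamma> \<Delta> g t \<subseteq> \<Theta>" for g t unfolding approx_sols_def \<Theta>_eq by auto
  show ?thesis
  proof (cases "K = {}")
    case True
    show ?thesis
      by (rule exI[of _ 1]) (use True as in \<open>force simp: K_def\<close>)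
  next
    case False
    have cK: "compact K" unfolding K_def
      by (intro compact_Int_closed cpt closed_Collect_le continuous_on_const continuous_on_infdist continuous_on_id)
    have "continuous_on K (Q_of \<Gamma> \<Delta> f)" using Q_cont by (rule continuous_on_subset) (auto simp: K_def)
    then obtain \<theta>m where tm: "\<theta>m \<in> K" and mm: "\<forall>\<theta>\<in>K. Q_of \<Gamma> \<Delta> f \<theta>m \<le> Q_of \<Gamma> \<Delta> f \<theta>"
      using continuous_attains_inf[OF cK False] by blast
    define c where "c = Q_of \<Gamma> \<Delta> f \<theta>m"
    have cpos: "c > 0"
    proof (rule ccontr)
      assume "\<not> c > 0"
      then have "\<theta>m \<in> minimax_sols \<Gamma> \<Delta> f" using Q_zero tm by (auto simp: c_def K_def)
      then have "infdist \<theta>m (minimax_sols \<Gamma> \<Delta> f) = 0" by (rule infdist_zero)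
      then show False using tm e by (auto simp: K_def)
    qed
    show ?thesis
    proof (rule exI[of _ "c/4"], intro conjI allI impI)
      show "c/4 > 0" using cpos by simp
      fix g t \<theta> assume a: "\<forall>\<theta>\<in>\<Theta>. \<bar>g \<theta> - f \<theta>\<bar> \<le> c/4" and t: "t \<le> c/4"
        and th: "\<theta> \<in> approx_sols \<Gamma> \<Delta> g t"
      have tT: "\<theta> \<in> \<Theta>" using th as by auto
      have "Q_of \<Gamma> \<Delta> g \<theta> \<le> t" using th by (simp add: approx_sols_def)
      moreover have "\<bar>Q_of \<Gamma> \<Delta> g \<theta> - Q_of \<Gamma> \<Delta> f \<theta>\<bar> \<le> 2 * (c/4)" by (rule Q_close[OF a tT])
      ultimately have "Q_of \<Gamma> \<Delta> f \<theta> < c" using t cpos unfolding abs_le_iff by linarith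
      then have "\<theta> \<notin> K" using mm by (force simp: c_def)
      then show "infdist \<theta> (minimax_sols \<Gamma> \<Delta> f) < \<epsilon>" using tT by (auto simp: K_def)
    qed
  qed
qed

lemma D2:
  assumes a: "\<forall>\<theta>\<in>\<Theta>. \<bar>g \<theta> - f \<theta>\<bar> \<le> \<eta>" and t: "2 * \<eta> \<le> t"
  shows "minimax_sols \<Gamma> \<Delta> f \<subseteq> approx_sols \<Gamma> \<Delta> g t"
proof
  fix \<theta> assume s: "\<theta> \<in> minimax_sols \<Gamma> \<Delta> f"
  have q: "Q_of \<Gamma> \<Delta> f \<theta> = 0" and tT: "\<theta> \<in> \<Theta>" using Q_sol[OF s] by auto
  have "\<bar>Q_of \<Gamma> \<Delta> g \<theta> - Q_of \<Gamma> \<Delta> f \<theta>\<bar> \<le> 2 * \<eta>" by (rule Q_close[OF a tT])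
  then have "Q_of \<Gamma> \<Delta> g \<theta> \<le> t" using q t by (simp add: abs_le_iff)
  then show "\<theta> \<in> approx_sols \<Gamma> \<Delta> g t" using tT \<Theta>_eq by (simp add: approx_sols_def)
qed

end

lemma opl_union:
  assumes "outer_prob_less M A e1" "outer_prob_less M B e2" "S \<subseteq> A \<union> B"
  shows "outer_prob_less M S (e1 + e2)"
proof -
  obtain A' where A': "A' \<in> sets M" "A \<inter> space M \<subseteq> A'" "measure M A' < e1"
    using assms(1) unfolding outer_prob_less_def by blast
  obtain B' where B': "B' \<in> sets M" "B \<inter> space M \<subseteq> B'" "measure M B' < e2"
    using assms(2) unfolding outer_prob_less_def by blast
  have "measure M (A' \<union> B') \<le> measure M A' + measure M B'" by (rule measure_Un_le[OF A'(1) B'(1)])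
  then show ?thesis unfolding outer_prob_less_def
    using A' B' assms(3) by (intro bexI[of _ "A' \<union> B'"]) auto
qed

lemma opl_mono:
  assumes "outer_prob_less M A e" "S \<subseteq> A"
  shows "outer_prob_less M S e"
  using assms unfolding outer_prob_less_def by blast

lemma partA:
  fixes M :: "'a measure" and \<Gamma> :: "'g::metric_space set" and \<Delta> :: "'d::metric_space set"
    and f :: "'g \<times> 'd \<Rightarrow> real" and \<Theta> :: "('g \<times> 'd) set"
    and fh :: "nat \<Rightarrow> 'a \<Rightarrow> 'g \<times> 'd \<Rightarrow> real" and \<tau> :: "nat \<Rightarrow> 'a \<Rightarrow> real"
  assumes \<Theta>_eq: "\<Theta> = \<Gamma> \<times> \<Delta>" and cpt: "compact \<Theta>" and ne: "\<Theta> \<noteq> {}"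
    and U: "\<forall>\<epsilon>>0. vanishing_events M (\<lambda>n. {\<omega> \<in> space M. \<exists>\<theta>\<in>\<Theta>. \<bar>fh n \<omega> \<theta> - f \<theta>\<bar> > \<epsilon>})"
    and fc: "continuous_on \<Theta> f"
    and tau: "tendsto_in_prob M \<tau> 0"
  shows "(\<forall>\<epsilon>>0. vanishing_events M (\<lambda>n. {\<omega> \<in> space M.
              \<exists>\<theta>\<in>approx_sols \<Gamma> \<Delta> (fh n \<omega>) (\<tau> n \<omega>).
                 infdist \<theta> (minimax_sols \<Gamma> \<Delta> f) > \<epsilon>}))
         \<and> tendsto_in_prob M (\<lambda>n \<omega>. V_of \<Gamma> \<Delta> (fh n \<omega>)) (V_of \<Gamma> \<Delta> f)"
proof (intro conjI allI impI)
  fix \<epsilon> :: real assume e: "\<epsilon> > 0"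
  obtain \<eta> where eta: "\<eta> > 0" and hD: "\<forall>g t \<theta>. (\<forall>\<theta>\<in>\<Theta>. \<bar>g \<theta> - f \<theta>\<bar> \<le> \<eta>) \<longrightarrow> t \<le> \<eta> \<longrightarrow>
            \<theta> \<in> approx_sols \<Gamma> \<Delta> g t \<longrightarrow> infdist \<theta> (minimax_sols \<Gamma> \<Delta> f) < \<epsilon>"
    using D1[OF \<Theta>_eq cpt ne fc e] by blast
  show "vanishing_events M (\<lambda>n. {\<omega> \<in> space M.
              \<exists>\<theta>\<in>approx_sols \<Gamma> \<Delta> (fh n \<omega>) (\<tau> n \<omega>).
                 infdist \<theta> (minimax_sols \<Gamma> \<Delta> f) > \<epsilon>})"
    unfolding vanishing_events_def
  proof (intro allI impI)
    fix p :: real assume p: "p > 0"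
    have ev1: "eventually (\<lambda>n. outer_prob_less M {\<omega> \<in> space M. \<exists>\<theta>\<in>\<Theta>. \<bar>fh n \<omega> \<theta> - f \<theta>\<bar> > \<eta>} (p/2)) sequentially"
      using U eta p unfolding vanishing_events_def by simp
    have ev2: "eventually (\<lambda>n. outer_prob_less M {\<omega> \<in> space M. \<bar>\<tau> n \<omega> - 0\<bar> > \<eta>} (p/2)) sequentially"
      using tau eta p unfolding tendsto_in_prob_def vanishing_events_def by simp
    show "eventually (\<lambda>n. outer_prob_less M {\<omega> \<in> space M.
              \<exists>\<theta>\<in>approx_sols \<Gamma> \<Delta> (fh n \<omega>) (\<tau> n \<omega>).
                 infdist \<theta> (minimax_sols \<Gamma> \<Delta> f) > \<epsilon>} p) sequentially"
    proof (rule eventually_mono[OF eventually_conj[OF ev1 ev2]], elim conjE)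
      fix n
      assume o1: "outer_prob_less M {\<omega> \<in> space M. \<exists>\<theta>\<in>\<Theta>. \<bar>fh n \<omega> \<theta> - f \<theta>\<bar> > \<eta>} (p/2)"
        and o2: "outer_prob_less M {\<omega> \<in> space M. \<bar>\<tau> n \<omega> - 0\<bar> > \<eta>} (p/2)"
      have "{\<omega> \<in> space M. \<exists>\<theta>\<in>approx_sols \<Gamma> \<Delta> (fh n \<omega>) (\<tau> n \<omega>).
                 infdist \<theta> (minimax_sols \<Gamma> \<Delta> f) > \<epsilon>}
            \<subseteq> {\<omega> \<in> space M. \<exists>\<theta>\<in>\<Theta>. \<bar>fh n \<omega> \<theta> - f \<theta>\<bar> > \<eta>} \<union> {\<omega> \<in> space M. \<bar>\<tau> n \<omega> - 0\<bar> > \<eta>}"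
      proof (rule subsetI, rule ccontr)
        fix \<omega> assume w: "\<omega> \<in> {\<omega> \<in> space M. \<exists>\<theta>\<in>approx_sols \<Gamma> \<Delta> (fh n \<omega>) (\<tau> n \<omega>).
                 infdist \<theta> (minimax_sols \<Gamma> \<Delta> f) > \<epsilon>}"
          and nw: "\<omega> \<notin> {\<omega> \<in> space M. \<exists>\<theta>\<in>\<Theta>. \<bar>fh n \<omega> \<theta> - f \<theta>\<bar> > \<eta>} \<union> {\<omega> \<in> space M. \<bar>\<tau> n \<omega> - 0\<bar> > \<eta>}"
        have a1: "\<forall>\<theta>\<in>\<Theta>. \<bar>fh n \<omega> \<theta> - f \<theta>\<bar> \<le> \<eta>" using w nw by force
        have a2: "\<tau> n \<omega> \<le> \<eta>" using w nw by force
        show False using hD a1 a2 w by force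
      qed
      then show "outer_prob_less M {\<omega> \<in> space M.
              \<exists>\<theta>\<in>approx_sols \<Gamma> \<Delta> (fh n \<omega>) (\<tau> n \<omega>).
                 infdist \<theta> (minimax_sols \<Gamma> \<Delta> f) > \<epsilon>} p"
        using opl_union[OF o1 o2] by simp
    qed
  qed
next
  show "tendsto_in_prob M (\<lambda>n \<omega>. V_of \<Gamma> \<Delta> (fh n \<omega>)) (V_of \<Gamma> \<Delta> f)"
    unfolding tendsto_in_prob_def vanishing_events_def
  proof (intro allI impI)
    fix \<epsilon> p :: real assume e: "\<epsilon> > 0" and p: "p > 0"
    have ev1: "eventually (\<lambda>n. outer_prob_less M {\<omega> \<in> space M. \<exists>\<theta>\<in>\<Theta>. \<bar>fh n \<omega> \<theta> - f \<theta>\<bar> > \<epsilon>} p) sequentially"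
      using U e p unfolding vanishing_events_def by simp
    show "eventually (\<lambda>n. outer_prob_less M {\<omega> \<in> space M. \<bar>V_of \<Gamma> \<Delta> (fh n \<omega>) - V_of \<Gamma> \<Delta> f\<bar> > \<epsilon>} p) sequentially"
    proof (rule eventually_mono[OF ev1])
      fix n assume o1: "outer_prob_less M {\<omega> \<in> space M. \<exists>\<theta>\<in>\<Theta>. \<bar>fh n \<omega> \<theta> - f \<theta>\<bar> > \<epsilon>} p"
      have "{\<omega> \<in> space M. \<bar>V_of \<Gamma> \<Delta> (fh n \<omega>) - V_of \<Gamma> \<Delta> f\<bar> > \<epsilon>} \<subseteq> {\<omega> \<in> space M. \<exists>\<theta>\<in>\<Theta>. \<bar>fh n \<omega> \<theta> - f \<theta>\<bar> > \<epsilon>}"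
      proof (rule subsetI, rule ccontr)
        fix \<omega> assume w: "\<omega> \<in> {\<omega> \<in> space M. \<bar>V_of \<Gamma> \<Delta> (fh n \<omega>) - V_of \<Gamma> \<Delta> f\<bar> > \<epsilon>}"
          and nw: "\<omega> \<notin> {\<omega> \<in> space M. \<exists>\<theta>\<in>\<Theta>. \<bar>fh n \<omega> \<theta> - f \<theta>\<bar> > \<epsilon>}"
        have "\<forall>\<theta>\<in>\<Theta>. \<bar>fh n \<omega> \<theta> - f \<theta>\<bar> \<le> \<epsilon>" using w nw by force
        from V_close[OF \<Theta>_eq cpt ne fc this] show False using w by simp
      qed
      then show "outer_prob_less M {\<omega> \<in> space M. \<bar>V_of \<Gamma> \<Delta> (fh n \<omega>) - V_of \<Gamma> \<Delta> f\<bar> > \<epsilon>} p"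
        by (rule opl_mono[OF o1])
    qed
  qed
qed


lemma W_vanish:
  fixes M :: "'a measure" and f :: "'t \<Rightarrow> real"
    and fh :: "nat \<Rightarrow> 'a \<Rightarrow> 't \<Rightarrow> real" and \<tau> :: "nat \<Rightarrow> 'a \<Rightarrow> real"
  assumes OP: "\<forall>e>0. \<exists>K. eventually (\<lambda>n. outer_prob_less M
              {\<omega> \<in> space M. \<exists>\<theta>\<in>\<Theta>. sqrt (real n) * \<bar>fh n \<omega> \<theta> - f \<theta>\<bar> > K} e) sequentially"
    and pos: "\<forall>n. \<forall>\<omega>\<in>space M. 0 < \<tau> n \<omega>"
    and tau2: "tendsto_in_prob M (\<lambda>n \<omega>. (1 / sqrt (real n)) / \<tau> n \<omega>) 0"
  shows "vanishing_events M (\<lambda>n. {\<omega> \<in> space M. \<exists>\<theta>\<in>\<Theta>. \<tau> n \<omega> < 2 * \<bar>fh n \<omega> \<theta> - f \<theta>\<bar>})"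
  unfolding vanishing_events_def
proof (intro allI impI)
  fix p :: real assume p: "p > 0"
  obtain K where ev1: "eventually (\<lambda>n. outer_prob_less M
              {\<omega> \<in> space M. \<exists>\<theta>\<in>\<Theta>. sqrt (real n) * \<bar>fh n \<omega> \<theta> - f \<theta>\<bar> > K} (p/2)) sequentially"
    using OP p by (meson half_gt_zero)
  define K' where "K' = max K 1"
  have K'pos: "K' > 0" by (simp add: K'_def)
  have ev2: "eventually (\<lambda>n. outer_prob_less M
      {\<omega> \<in> space M. \<bar>(1 / sqrt (real n)) / \<tau> n \<omega> - 0\<bar> > 1 / (2 * K')} (p/2)) sequentially"
    using tau2 p K'pos unfolding tendsto_in_prob_def vanishing_events_def by simp
  have ev3: "eventually (\<lambda>n. n \<ge> (1::nat)) sequentially" by (rule eventually_ge_at_top)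
  show "eventually (\<lambda>n. outer_prob_less M {\<omega> \<in> space M. \<exists>\<theta>\<in>\<Theta>. \<tau> n \<omega> < 2 * \<bar>fh n \<omega> \<theta> - f \<theta>\<bar>} p) sequentially"
  proof (rule eventually_mono[OF eventually_conj[OF ev1 eventually_conj[OF ev2 ev3]]], elim conjE)
    fix n :: nat
    assume o1: "outer_prob_less M
              {\<omega> \<in> space M. \<exists>\<theta>\<in>\<Theta>. sqrt (real n) * \<bar>fh n \<omega> \<theta> - f \<theta>\<bar> > K} (p/2)"
      and o2: "outer_prob_less M
      {\<omega> \<in> space M. \<bar>(1 / sqrt (real n)) / \<tau> n \<omega> - 0\<bar> > 1 / (2 * K')} (p/2)"
      and n1: "n \<ge> 1"
    have sp: "sqrt (real n) > 0" using n1 by simp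
    have "{\<omega> \<in> space M. \<exists>\<theta>\<in>\<Theta>. \<tau> n \<omega> < 2 * \<bar>fh n \<omega> \<theta> - f \<theta>\<bar>} \<subseteq>
       {\<omega> \<in> space M. \<exists>\<theta>\<in>\<Theta>. sqrt (real n) * \<bar>fh n \<omega> \<theta> - f \<theta>\<bar> > K} \<union>
       {\<omega> \<in> space M. \<bar>(1 / sqrt (real n)) / \<tau> n \<omega> - 0\<bar> > 1 / (2 * K')}"
    proof (rule subsetI, rule ccontr)
      fix \<omega> assume w: "\<omega> \<in> {\<omega> \<in> space M. \<exists>\<theta>\<in>\<Theta>. \<tau> n \<omega> < 2 * \<bar>fh n \<omega> \<theta> - f \<theta>\<bar>}"
        and nw: "\<omega> \<notin> {\<omega> \<in> space M. \<exists>\<theta>\<in>\<Theta>. sqrt (real n) * \<bar>fh n \<omega> \<theta> - f \<theta>\<bar> > K} \<union>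
       {\<omega> \<in> space M. \<bar>(1 / sqrt (real n)) / \<tau> n \<omega> - 0\<bar> > 1 / (2 * K')}"
      obtain \<theta> where th: "\<theta> \<in> \<Theta>" and lt: "\<tau> n \<omega> < 2 * \<bar>fh n \<omega> \<theta> - f \<theta>\<bar>" and wM: "\<omega> \<in> space M"
        using w by blast
      have tp: "\<tau> n \<omega> > 0" using pos wM by blast
      have b1: "sqrt (real n) * \<bar>fh n \<omega> \<theta> - f \<theta>\<bar> \<le> K'" using nw th wM by (force simp: K'_def)
      have b2: "(1 / sqrt (real n)) / \<tau> n \<omega> \<le> 1 / (2 * K')" using nw wM tp sp by force
      have "2 * K' \<le> sqrt (real n) * \<tau> n \<omega>"
        using b2 sp tp K'pos by (simp add: field_simps)
      then have "sqrt (real n) * (2 * \<bar>fh n \<omega> \<theta> - f \<theta>\<bar>) \<le> sqrt (real n) * \<tau> n \<omega>"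
        using b1 by linarith
      then have "2 * \<bar>fh n \<omega> \<theta> - f \<theta>\<bar> \<le> \<tau> n \<omega>" using sp by simp
      then show False using lt by simp
    qed
    then show "outer_prob_less M {\<omega> \<in> space M. \<exists>\<theta>\<in>\<Theta>. \<tau> n \<omega> < 2 * \<bar>fh n \<omega> \<theta> - f \<theta>\<bar>} p"
      using opl_union[OF o1 o2] by simp
  qed
qed




lemma van_union:
  assumes A: "vanishing_events M A" and B: "vanishing_events M B" and S: "\<And>n. S n \<subseteq> A n \<union> B n"
  shows "vanishing_events M S"
  unfolding vanishing_events_def
proof (intro allI impI)
  fix p :: real assume p: "p > 0"
  have "eventually (\<lambda>n. outer_prob_less M (A n) (p/2)) sequentially"
    using A p unfolding vanishing_events_def by simp
  moreover have "eventually (\<lambda>n. outer_prob_less M (B n) (p/2)) sequentially"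
    using B p unfolding vanishing_events_def by simp
  ultimately show "eventually (\<lambda>n. outer_prob_less M (S n) p) sequentially"
  proof (rule eventually_elim2)
    fix n assume "outer_prob_less M (A n) (p/2)" "outer_prob_less M (B n) (p/2)"
    from opl_union[OF this S[of n]] show "outer_prob_less M (S n) p" by simp
  qed
qed

lemma van_mono:
  assumes A: "vanishing_events M A" and S: "\<And>n. S n \<subseteq> A n"
  shows "vanishing_events M S"
proof (rule van_union[OF A A])
  fix n show "S n \<subseteq> A n \<union> A n" using S[of n] by simp
qed

lemma partB:
  fixes M :: "'a measure" and \<Gamma> :: "'g::metric_space set" and \<Delta> :: "'d::metric_space set"
    and f :: "'g \<times> 'd \<Rightarrow> real" and \<Theta> :: "('g \<times> 'd) set"
    and fh :: "nat \<Rightarrow> 'a \<Rightarrow> 'g \<times> 'd \<Rightarrow> real" and \<tau> :: "nat \<Rightarrow> 'a \<Rightarrow> real"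
  assumes \<Theta>_eq: "\<Theta> = \<Gamma> \<times> \<Delta>" and cpt: "compact \<Theta>" and ne: "\<Theta> \<noteq> {}"
    and U: "\<forall>\<epsilon>>0. vanishing_events M (\<lambda>n. {\<omega> \<in> space M. \<exists>\<theta>\<in>\<Theta>. \<bar>fh n \<omega> \<theta> - f \<theta>\<bar> > \<epsilon>})"
    and fc: "continuous_on \<Theta> f"
    and OP: "\<forall>e>0. \<exists>K. eventually (\<lambda>n. outer_prob_less M
              {\<omega> \<in> space M. \<exists>\<theta>\<in>\<Theta>. sqrt (real n) * \<bar>fh n \<omega> \<theta> - f \<theta>\<bar> > K} e) sequentially"
    and pos: "\<forall>n. \<forall>\<omega>\<in>space M. 0 < \<tau> n \<omega>"
    and tau: "tendsto_in_prob M \<tau> 0"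
    and tau2: "tendsto_in_prob M (\<lambda>n \<omega>. (1 / sqrt (real n)) / \<tau> n \<omega>) 0"
  shows "(\<forall>\<epsilon>>0. vanishing_events M (\<lambda>n. {\<omega> \<in> space M.
              \<exists>\<theta>\<in>minimax_sols \<Gamma> \<Delta> f.
                 approx_sols \<Gamma> \<Delta> (fh n \<omega>) (\<tau> n \<omega>) = {}
                 \<or> infdist \<theta> (approx_sols \<Gamma> \<Delta> (fh n \<omega>) (\<tau> n \<omega>)) > \<epsilon>}))
         \<and> (\<forall>\<epsilon>>0. vanishing_events M (\<lambda>n. {\<omega> \<in> space M.
              approx_sols \<Gamma> \<Delta> (fh n \<omega>) (\<tau> n \<omega>) = {}
              \<or> hausdorff_dist (approx_sols \<Gamma> \<Delta> (fh n \<omega>) (\<tau> n \<omega>)) (minimax_sols \<Gamma> \<Delta> f) > \<epsilon>}))"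
proof -
  let ?W = "\<lambda>n. {\<omega> \<in> space M. \<exists>\<theta>\<in>\<Theta>. \<tau> n \<omega> < 2 * \<bar>fh n \<omega> \<theta> - f \<theta>\<bar>}"
  have W: "vanishing_events M ?W" by (rule W_vanish[OF OP pos tau2])
  have incl: "minimax_sols \<Gamma> \<Delta> f \<subseteq> approx_sols \<Gamma> \<Delta> (fh n \<omega>) (\<tau> n \<omega>)"
    if "\<omega> \<in> space M" "\<omega> \<notin> ?W n" for n \<omega>
  proof (rule D2[OF \<Theta>_eq cpt ne fc])
    show "\<forall>\<theta>\<in>\<Theta>. \<bar>fh n \<omega> \<theta> - f \<theta>\<bar> \<le> \<tau> n \<omega> / 2"
    proof
      fix \<theta> assume "\<theta> \<in> \<Theta>"
      then have "\<not> \<tau> n \<omega> < 2 * \<bar>fh n \<omega> \<theta> - f \<theta>\<bar>" using that by blast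
      then show "\<bar>fh n \<omega> \<theta> - f \<theta>\<bar> \<le> \<tau> n \<omega> / 2" by simp
    qed
  qed simp
  have sne: "minimax_sols \<Gamma> \<Delta> f \<noteq> {}" by (rule sols_ne[OF \<Theta>_eq cpt ne fc])
  show ?thesis
  proof (intro conjI allI impI)
    fix \<epsilon> :: real assume e: "\<epsilon> > 0"
    show "vanishing_events M (\<lambda>n. {\<omega> \<in> space M.
              \<exists>\<theta>\<in>minimax_sols \<Gamma> \<Delta> f.
                 approx_sols \<Gamma> \<Delta> (fh n \<omega>) (\<tau> n \<omega>) = {}
                 \<or> infdist \<theta> (approx_sols \<Gamma> \<Delta> (fh n \<omega>) (\<tau> n \<omega>)) > \<epsilon>})"
    proof (rule van_mono[OF W], rule subsetI, rule ccontr)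
      fix n \<omega>
      assume w: "\<omega> \<in> {\<omega> \<in> space M.
              \<exists>\<theta>\<in>minimax_sols \<Gamma> \<Delta> f.
                 approx_sols \<Gamma> \<Delta> (fh n \<omega>) (\<tau> n \<omega>) = {}
                 \<or> infdist \<theta> (approx_sols \<Gamma> \<Delta> (fh n \<omega>) (\<tau> n \<omega>)) > \<epsilon>}" and nw: "\<omega> \<notin> ?W n"
      then obtain \<theta> where th: "\<theta> \<in> minimax_sols \<Gamma> \<Delta> f" and wM: "\<omega> \<in> space M"
        and d: "approx_sols \<Gamma> \<Delta> (fh n \<omega>) (\<tau> n \<omega>) = {}
                 \<or> infdist \<theta> (approx_sols \<Gamma> \<Delta> (fh n \<omega>) (\<tau> n \<omega>)) > \<epsilon>" by blast
      have "\<theta> \<in> approx_sols \<Gamma> \<Delta> (fh n \<omega>) (\<tau> n \<omega>)" using incl[OF wM nw] th by blast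
      then have "infdist \<theta> (approx_sols \<Gamma> \<Delta> (fh n \<omega>) (\<tau> n \<omega>)) = 0"
        by (rule infdist_zero)
      then show False using d e \<open>\<theta> \<in> approx_sols \<Gamma> \<Delta> (fh n \<omega>) (\<tau> n \<omega>)\<close> by auto
    qed
  next
    fix \<epsilon> :: real assume e: "\<epsilon> > 0"
    obtain \<eta> where eta: "\<eta> > 0" and hD: "\<forall>g t \<theta>. (\<forall>\<theta>\<in>\<Theta>. \<bar>g \<theta> - f \<theta>\<bar> \<le> \<eta>) \<longrightarrow> t \<le> \<eta> \<longrightarrow>
            \<theta> \<in> approx_sols \<Gamma> \<Delta> g t \<longrightarrow> infdist \<theta> (minimax_sols \<Gamma> \<Delta> f) < \<epsilon>"
      using D1[OF \<Theta>_eq cpt ne fc e] by blast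
    let ?U = "\<lambda>n. {\<omega> \<in> space M. \<exists>\<theta>\<in>\<Theta>. \<bar>fh n \<omega> \<theta> - f \<theta>\<bar> > \<eta>}"
    let ?T = "\<lambda>n. {\<omega> \<in> space M. \<bar>\<tau> n \<omega> - 0\<bar> > \<eta>}"
    have VU: "vanishing_events M ?U" using U eta by blast
    have VT: "vanishing_events M ?T" using tau eta unfolding tendsto_in_prob_def by blast
    have VUT: "vanishing_events M (\<lambda>n. ?U n \<union> ?T n)" by (rule van_union[OF VU VT]) simp
    show "vanishing_events M (\<lambda>n. {\<omega> \<in> space M.
              approx_sols \<Gamma> \<Delta> (fh n \<omega>) (\<tau> n \<omega>) = {}
              \<or> hausdorff_dist (approx_sols \<Gamma> \<Delta> (fh n \<omega>) (\<tau> n \<omega>)) (minimax_sols \<Gamma> \<Delta> f) > \<epsilon>})"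
    proof (rule van_union[OF W VUT], rule subsetI, rule ccontr)
      fix n \<omega>
      let ?A = "approx_sols \<Gamma> \<Delta> (fh n \<omega>) (\<tau> n \<omega>)"
      assume w: "\<omega> \<in> {\<omega> \<in> space M.
              approx_sols \<Gamma> \<Delta> (fh n \<omega>) (\<tau> n \<omega>) = {}
              \<or> hausdorff_dist (approx_sols \<Gamma> \<Delta> (fh n \<omega>) (\<tau> n \<omega>)) (minimax_sols \<Gamma> \<Delta> f) > \<epsilon>}"
        and nw: "\<omega> \<notin> ?W n \<union> (?U n \<union> ?T n)"
      have wM: "\<omega> \<in> space M" using w by blast
      have sub: "minimax_sols \<Gamma> \<Delta> f \<subseteq> ?A" using incl[OF wM] nw by blast
      have Ane: "?A \<noteq> {}" using sub sne by blast
      have a1: "\<forall>\<theta>\<in>\<Theta>. \<bar>fh n \<omega> \<theta> - f \<theta>\<bar> \<le> \<eta>"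
      proof
        fix \<theta> assume "\<theta> \<in> \<Theta>"
        then have "\<not> \<bar>fh n \<omega> \<theta> - f \<theta>\<bar> > \<eta>" using wM nw by blast
        then show "\<bar>fh n \<omega> \<theta> - f \<theta>\<bar> \<le> \<eta>" by simp
      qed
      have "\<not> \<bar>\<tau> n \<omega> - 0\<bar> > \<eta>" using wM nw by blast
      then have a2: "\<tau> n \<omega> \<le> \<eta>" by simp
      have s1: "(SUP a\<in>?A. infdist a (minimax_sols \<Gamma> \<Delta> f)) \<le> \<epsilon>"
      proof (rule cSUP_least[OF Ane])
        fix a assume "a \<in> ?A"
        then have "infdist a (minimax_sols \<Gamma> \<Delta> f) < \<epsilon>" using hD a1 a2 by blast
        then show "infdist a (minimax_sols \<Gamma> \<Delta> f) \<le> \<epsilon>" by simp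
      qed
      have s2: "(SUP b\<in>minimax_sols \<Gamma> \<Delta> f. infdist b ?A) \<le> \<epsilon>"
      proof (rule cSUP_least[OF sne])
        fix b assume "b \<in> minimax_sols \<Gamma> \<Delta> f"
        then have "b \<in> ?A" using sub by blast
        then have "infdist b ?A = 0" by (rule infdist_zero)
        then show "infdist b ?A \<le> \<epsilon>" using e by simp
      qed
      have "hausdorff_dist ?A (minimax_sols \<Gamma> \<Delta> f) \<le> \<epsilon>"
        unfolding hausdorff_dist_def using s1 s2 by simp
      moreover have "?A = {} \<or> hausdorff_dist ?A (minimax_sols \<Gamma> \<Delta> f) > \<epsilon>" using w by blast
      ultimately show False using Ane by linarith
    qed
  qed
qed

theorem theorem1:
  fixes M :: "'a measure"
    and \<X> :: "'x::euclidean_space set" and \<Z> :: "'z::euclidean_space set"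
    and \<Gamma> :: "'g::euclidean_space set" and \<Delta> :: "'d::euclidean_space set"
    and X :: "'a \<Rightarrow> 'x" and Z :: "'a \<Rightarrow> 'z"
    and Xs :: "nat \<Rightarrow> 'a \<Rightarrow> 'x" and Zs :: "nat \<Rightarrow> 'a \<Rightarrow> 'z"
    and G :: "'z \<Rightarrow> 'g \<Rightarrow> 'x" and D :: "'x \<Rightarrow> 'd \<Rightarrow> real"
    and \<tau> :: "nat \<Rightarrow> 'a \<Rightarrow> real"
    and f :: "'g \<times> 'd \<Rightarrow> real" and \<Theta> :: "('g \<times> 'd) set"
    and fh :: "nat \<Rightarrow> 'a \<Rightarrow> 'g \<times> 'd \<Rightarrow> real"
  assumes M: "prob_space M"
    and \<Theta>_def: "\<Theta> = \<Gamma> \<times> \<Delta>"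
    and compact: "compact \<Theta>" and nonempty: "\<Theta> \<noteq> {}"
    and X_meas: "X \<in> borel_measurable M" and Z_meas: "Z \<in> borel_measurable M"
    and X_range: "\<forall>\<omega>\<in>space M. X \<omega> \<in> \<X>" and Z_range: "\<forall>\<omega>\<in>space M. Z \<omega> \<in> \<Z>"
    and Xs_range: "\<forall>i. \<forall>\<omega>\<in>space M. Xs i \<omega> \<in> \<X>"
    and Zs_range: "\<forall>i. \<forall>\<omega>\<in>space M. Zs i \<omega> \<in> \<Z>"
    and indep: "prob_space.indep_vars M (\<lambda>_. borel) (\<lambda>i \<omega>. (Xs i \<omega>, Zs i \<omega>)) UNIV"
    and ident: "\<forall>i. distr M borel (\<lambda>\<omega>. (Xs i \<omega>, Zs i \<omega>)) = distr M borel (\<lambda>\<omega>. (X \<omega>, Z \<omega>))"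
    and G_range: "\<forall>z\<in>\<Z>. \<forall>\<gamma>\<in>\<Gamma>. G z \<gamma> \<in> \<X>"
    and D_range: "\<forall>x\<in>\<X>. \<forall>\<delta>\<in>\<Delta>. 0 < D x \<delta> \<and> D x \<delta> < 1"
    and F_meas: "\<forall>\<gamma>\<in>\<Gamma>. \<forall>\<delta>\<in>\<Delta>. (\<lambda>\<omega>. ganF D G (X \<omega>) (Z \<omega>) \<gamma> \<delta>) \<in> borel_measurable M"
    and F_cont: "AE \<omega> in M. continuous_on \<Theta> (\<lambda>\<theta>. ganF D G (X \<omega>) (Z \<omega>) (fst \<theta>) (snd \<theta>))"
    and f_def: "f = (\<lambda>\<theta>. integral\<^sup>L M (\<lambda>\<omega>. ganF D G (X \<omega>) (Z \<omega>) (fst \<theta>) (snd \<theta>)))"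
    and fh_def: "fh = fhat D G Xs Zs"
  shows
    "((\<forall>\<epsilon>>0. vanishing_events M (\<lambda>n. {\<omega> \<in> space M. \<exists>\<theta>\<in>\<Theta>. \<bar>fh n \<omega> \<theta> - f \<theta>\<bar> > \<epsilon>}))
       \<and> continuous_on \<Theta> f
       \<and> (\<forall>n. \<tau> n \<in> borel_measurable M) \<and> (\<forall>n. \<forall>\<omega>\<in>space M. 0 \<le> \<tau> n \<omega>)
       \<and> tendsto_in_prob M \<tau> 0
     \<longrightarrow> (\<forall>\<epsilon>>0. vanishing_events M (\<lambda>n. {\<omega> \<in> space M.
              \<exists>\<theta>\<in>approx_sols \<Gamma> \<Delta> (fh n \<omega>) (\<tau> n \<omega>).
                 infdist \<theta> (minimax_sols \<Gamma> \<Delta> f) > \<epsilon>}))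
         \<and> tendsto_in_prob M (\<lambda>n \<omega>. V_of \<Gamma> \<Delta> (fh n \<omega>)) (V_of \<Gamma> \<Delta> f))
   \<and>
    ((\<forall>\<epsilon>>0. vanishing_events M (\<lambda>n. {\<omega> \<in> space M. \<exists>\<theta>\<in>\<Theta>. \<bar>fh n \<omega> \<theta> - f \<theta>\<bar> > \<epsilon>}))
       \<and> continuous_on \<Theta> f
       \<and> (\<forall>e>0. \<exists>K. eventually (\<lambda>n. outer_prob_less M
              {\<omega> \<in> space M. \<exists>\<theta>\<in>\<Theta>. sqrt (real n) * \<bar>fh n \<omega> \<theta> - f \<theta>\<bar> > K} e) sequentially)
       \<and> (\<forall>n. \<tau> n \<in> borel_measurable M) \<and> (\<forall>n. \<forall>\<omega>\<in>space M. 0 < \<tau> n \<omega>)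
       \<and> tendsto_in_prob M \<tau> 0
       \<and> tendsto_in_prob M (\<lambda>n \<omega>. (1 / sqrt (real n)) / \<tau> n \<omega>) 0
     \<longrightarrow> (\<forall>\<epsilon>>0. vanishing_events M (\<lambda>n. {\<omega> \<in> space M.
              \<exists>\<theta>\<in>minimax_sols \<Gamma> \<Delta> f.
                 approx_sols \<Gamma> \<Delta> (fh n \<omega>) (\<tau> n \<omega>) = {}
                 \<or> infdist \<theta> (approx_sols \<Gamma> \<Delta> (fh n \<omega>) (\<tau> n \<omega>)) > \<epsilon>}))
         \<and> (\<forall>\<epsilon>>0. vanishing_events M (\<lambda>n. {\<omega> \<in> space M.
              approx_sols \<Gamma> \<Delta> (fh n \<omega>) (\<tau> n \<omega>) = {}
              \<or> hausdorff_dist (approx_sols \<Gamma> \<Delta> (fh n \<omega>) (\<tau> n \<omega>)) (minimax_sols \<Gamma> \<Delta> f) > \<epsilon>})))"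
proof -
  show ?thesis
  proof (rule conjI; rule impI)
    assume H: "(\<forall>\<epsilon>>0. vanishing_events M (\<lambda>n. {\<omega> \<in> space M. \<exists>\<theta>\<in>\<Theta>. \<bar>fh n \<omega> \<theta> - f \<theta>\<bar> > \<epsilon>}))
       \<and> continuous_on \<Theta> f
       \<and> (\<forall>n. \<tau> n \<in> borel_measurable M) \<and> (\<forall>n. \<forall>\<omega>\<in>space M. 0 \<le> \<tau> n \<omega>)
       \<and> tendsto_in_prob M \<tau> 0"
    show "(\<forall>\<epsilon>>0. vanishing_events M (\<lambda>n. {\<omega> \<in> space M.
              \<exists>\<theta>\<in>approx_sols \<Gamma> \<Delta> (fh n \<omega>) (\<tau> n \<omega>).
                 infdist \<theta> (minimax_sols \<Gamma> \<Delta> f) > \<epsilon>}))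
         \<and> tendsto_in_prob M (\<lambda>n \<omega>. V_of \<Gamma> \<Delta> (fh n \<omega>)) (V_of \<Gamma> \<Delta> f)"
      by (rule partA[OF \<Theta>_def compact nonempty]) (use H in simp_all)
  next
    assume H: "(\<forall>\<epsilon>>0. vanishing_events M (\<lambda>n. {\<omega> \<in> space M. \<exists>\<theta>\<in>\<Theta>. \<bar>fh n \<omega> \<theta> - f \<theta>\<bar> > \<epsilon>}))
       \<and> continuous_on \<Theta> f
       \<and> (\<forall>e>0. \<exists>K. eventually (\<lambda>n. outer_prob_less M
              {\<omega> \<in> space M. \<exists>\<theta>\<in>\<Theta>. sqrt (real n) * \<bar>fh n \<omega> \<theta> - f \<theta>\<bar> > K} e) sequentially)
       \<and> (\<forall>n. \<tau> n \<in> borel_measurable M) \<and> (\<forall>n. \<forall>\<omega>\<in>space M. 0 < \<tau> n \<omega>)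
       \<and> tendsto_in_prob M \<tau> 0
       \<and> tendsto_in_prob M (\<lambda>n \<omega>. (1 / sqrt (real n)) / \<tau> n \<omega>) 0"
    show "(\<forall>\<epsilon>>0. vanishing_events M (\<lambda>n. {\<omega> \<in> space M.
              \<exists>\<theta>\<in>minimax_sols \<Gamma> \<Delta> f.
                 approx_sols \<Gamma> \<Delta> (fh n \<omega>) (\<tau> n \<omega>) = {}
                 \<or> infdist \<theta> (approx_sols \<Gamma> \<Delta> (fh n \<omega>) (\<tau> n \<omega>)) > \<epsilon>}))
         \<and> (\<forall>\<epsilon>>0. vanishing_events M (\<lambda>n. {\<omega> \<in> space M.
              approx_sols \<Gamma> \<Delta> (fh n \<omega>) (\<tau> n \<omega>) = {}
              \<or> hausdorff_dist (approx_sols \<Gamma> \<Delta> (fh n \<omega>) (\<tau> n \<omega>)) (minimax_sols \<Gamma> \<Delta> f) > \<epsilon>}))"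
      by (rule partB[OF \<Theta>_def compact nonempty]) (use H in simp_all)
  qed
qed

end
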